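(* Let $(X,Y,R)$ be a random triple with $X\in\mathbb{R}^d$, $Y\in\{0,1\}$, $R\in\{0,1\}$, $P(Y=y,R=r)>0$ for all $y,r$, and with strictly positive conditional Lebesgue densities $p(x\mid Y=y,R=r)$; write $p(x,y\mid R=r)=p(x\mid Y=y,R=r)P(Y=y\mid R=r)$, $p(x\mid R=r)$ for the density of $X$ given $R=r$, and $\eta_1(x)=P(Y=1\mid X=x,R=1)$. Let $T:\mathbb{R}^d\to\mathbb{R}^k$ be measurable, $t=T(x)$, $T=T(X)$, and for $\theta=(\alpha_0,\alpha_1,\beta_0,\beta_1)$ let $$q_\theta(x)=e^{\alpha_1+\beta_1^\top t}p(x,1\mid R=1)+e^{\alpha_0+\beta_0^\top t}p(x,0\mid R=1),\qquad \mathbf{R}(\theta)=\mathrm{KL}\big(p(\cdot\mid R=0);q_\theta\big).$$ Then the problem $$\min_\theta \mathbf{R}(\theta)\quad\text{subject to}\quad \int q_\theta(x)\,dx=1$$ is equivalent to the problem $$\min_\theta \mathbb{E}\big[-\log\{e^{\alpha_1+\beta_1^\top T}\eta_1(X)+e^{\alpha_0+\beta_0^\top T}(1-\eta_1(X))\}\bigm| R=0\big]$$ $$\text{subject to}\quad \mathbb{E}\big[e^{\alpha_1+\beta_1^\top T}\eta_1(X)+e^{\alpha_0+\beta_0^\top T}(1-\eta_1(X))\bigm| R=1\big]=1.$$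
   Context: $\mathrm{KL}(p;q)=\int p(x)\log\{p(x)/q(x)\}\,dx$ is the Kullback–Leibler divergence. $R=1$ indicates that $Y$ is observed and $R=0$ that it is missing.
   Formalization: $\mathrm{KL}(p(\cdot\mid R=0);p(\cdot\mid R=1))$ is finite (its integrand is integrable), and equivalence means that the two problems have the same constraint sets and the same minimizers. Apart from conventions, each condition added here is assumed in the paper as well or is needed for the statement above to hold. *)

theory Defs
  imports "HOL-Analysis.Analysis"
begin

text \<open>Joint probabilities P y r = P(Y=y, R=r) (y, r in {0,1}); conditional
  Lebesgue densities f y r x = p(x | Y=y, R=r) on R^d (type real^'d).\<close>

definition PR :: "(nat \<Rightarrow> nat \<Rightarrow> real) \<Rightarrow> nat \<Rightarrow> real" where
  "PR P r = P 0 r + P 1 r"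

definition pxy :: "(nat \<Rightarrow> nat \<Rightarrow> 'a \<Rightarrow> real) \<Rightarrow> (nat \<Rightarrow> nat \<Rightarrow> real) \<Rightarrow> 'a \<Rightarrow> nat \<Rightarrow> nat \<Rightarrow> real" where
  "pxy f P x y r = f y r x * (P y r / PR P r)"

definition pxr :: "(nat \<Rightarrow> nat \<Rightarrow> 'a \<Rightarrow> real) \<Rightarrow> (nat \<Rightarrow> nat \<Rightarrow> real) \<Rightarrow> nat \<Rightarrow> 'a \<Rightarrow> real" where
  "pxr f P r x = pxy f P x 0 r + pxy f P x 1 r"

definition eta1 :: "(nat \<Rightarrow> nat \<Rightarrow> 'a \<Rightarrow> real) \<Rightarrow> (nat \<Rightarrow> nat \<Rightarrow> real) \<Rightarrow> 'a \<Rightarrow> real" where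
  "eta1 f P x = pxy f P x 1 1 / pxr f P 1 x"

definition qth :: "(nat \<Rightarrow> nat \<Rightarrow> 'a \<Rightarrow> real) \<Rightarrow> (nat \<Rightarrow> nat \<Rightarrow> real) \<Rightarrow> ('a \<Rightarrow> 'k::real_inner)
    \<Rightarrow> real \<times> real \<times> 'k \<times> 'k \<Rightarrow> 'a \<Rightarrow> real" where
  "qth f P T \<theta> x = (case \<theta> of (a0, a1, b0, b1) \<Rightarrow>
      exp (a1 + b1 \<bullet> T x) * pxy f P x 1 1 + exp (a0 + b0 \<bullet> T x) * pxy f P x 0 1)"

definition wth :: "(nat \<Rightarrow> nat \<Rightarrow> 'a \<Rightarrow> real) \<Rightarrow> (nat \<Rightarrow> nat \<Rightarrow> real) \<Rightarrow> ('a \<Rightarrow> 'k::real_inner)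
    \<Rightarrow> real \<times> real \<times> 'k \<times> 'k \<Rightarrow> 'a \<Rightarrow> real" where
  "wth f P T \<theta> x = (case \<theta> of (a0, a1, b0, b1) \<Rightarrow>
      exp (a1 + b1 \<bullet> T x) * eta1 f P x + exp (a0 + b0 \<bullet> T x) * (1 - eta1 f P x))"

definition ext_integral :: "'a measure \<Rightarrow> ('a \<Rightarrow> real) \<Rightarrow> ereal" where
  "ext_integral M g = enn2ereal (\<integral>\<^sup>+ x. ennreal (g x) \<partial>M) - enn2ereal (\<integral>\<^sup>+ x. ennreal (- g x) \<partial>M)"

definition KL :: "('a::euclidean_space \<Rightarrow> real) \<Rightarrow> ('a \<Rightarrow> real) \<Rightarrow> ereal" where
  "KL p q = ext_integral lborel (\<lambda>x. p x * ln (p x / q x))"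

definition is_argmin :: "('t \<Rightarrow> bool) \<Rightarrow> ('t \<Rightarrow> ereal) \<Rightarrow> 't \<Rightarrow> bool" where
  "is_argmin C F \<theta> \<longleftrightarrow> C \<theta> \<and> (\<forall>\<theta>'. C \<theta>' \<longrightarrow> F \<theta> \<le> F \<theta>')"

end

theory Submission
  imports Defs
begin

lemma enn2ereal_fin: "x < \<infinity> \<Longrightarrow> enn2ereal x = ereal (enn2real x)"
  by (cases x rule: ennreal_cases) auto

lemma ext_integral_integrable:
  assumes "integrable M u"
  shows "ext_integral M u = ereal (integral\<^sup>L M u)"
proof -
  have m: "u \<in> borel_measurable M" using assms by auto
  have fin: "(\<integral>\<^sup>+ x. ennreal (norm (u x)) \<partial>M) < \<infinity>" using assms integrable_iff_bounded by blast
  have a: "(\<integral>\<^sup>+ x. ennreal (u x) \<partial>M) < \<infinity>"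
    by (rule le_less_trans[OF _ fin]) (auto intro!: nn_integral_mono)
  have b: "(\<integral>\<^sup>+ x. ennreal (- u x) \<partial>M) < \<infinity>"
    by (rule le_less_trans[OF _ fin]) (auto intro!: nn_integral_mono)
  show ?thesis unfolding ext_integral_def real_lebesgue_integral_def[OF assms]
    using enn2ereal_fin[OF a] enn2ereal_fin[OF b] by simp
qed

lemma pw: "ennreal (a + b) \<le> ennreal (norm a) + ennreal b" for a b :: real
proof (cases "b \<ge> 0")
  case True
  have "ennreal (a + b) \<le> ennreal (norm a + b)" by (rule ennreal_leI) simp
  also have "\<dots> = ennreal (norm a) + ennreal b" by (rule ennreal_plus) (use True in auto)
  finally show ?thesis .
next
  case False
  have "ennreal (a + b) \<le> ennreal (norm a)" by (rule ennreal_leI) (use False in simp)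
  also have "\<dots> = ennreal (norm a) + ennreal b" using False by (simp add: ennreal_neg)
  finally show ?thesis .
qed

lemma ext_integral_add:
  assumes g: "integrable M g" and h: "h \<in> borel_measurable M"
  shows "ext_integral M (\<lambda>x. g x + h x) = ereal (integral\<^sup>L M g) + ext_integral M h"
proof (cases "integrable M h")
  case True
  then show ?thesis using g by (simp add: ext_integral_integrable)
next
  case False
  have gm: "g \<in> borel_measurable M" using g by auto
  define G where "G = (\<integral>\<^sup>+ x. ennreal (norm (g x)) \<partial>M)"
  have G: "G < \<infinity>" using g integrable_iff_bounded G_def by blast
  define A where "A = (\<integral>\<^sup>+ x. ennreal (g x + h x) \<partial>M)"
  define A' where "A' = (\<integral>\<^sup>+ x. ennreal (h x) \<partial>M)"
  define B where "B = (\<integral>\<^sup>+ x. ennreal (- (g x + h x)) \<partial>M)"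
  define B' where "B' = (\<integral>\<^sup>+ x. ennreal (- h x) \<partial>M)"
  have A1: "A \<le> G + A'"
  proof -
    have "A \<le> (\<integral>\<^sup>+ x. ennreal (norm (g x)) + ennreal (h x) \<partial>M)"
      unfolding A_def by (rule nn_integral_mono) (rule pw)
    also have "\<dots> = G + A'" unfolding G_def A'_def
      using gm h by (intro nn_integral_add) auto
    finally show ?thesis .
  qed
  have A2: "A' \<le> G + A"
  proof -
    have "A' \<le> (\<integral>\<^sup>+ x. ennreal (norm (- g x)) + ennreal (g x + h x) \<partial>M)"
      unfolding A'_def by (rule nn_integral_mono) (metis pw[of "- g _" "g _ + h _"] minus_add_cancel)
    also have "\<dots> = G + A" unfolding G_def A_def
      using gm h by (subst nn_integral_add) auto
    finally show ?thesis .
  qed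
  have B1: "B \<le> G + B'"
  proof -
    have "B \<le> (\<integral>\<^sup>+ x. ennreal (norm (- g x)) + ennreal (- h x) \<partial>M)"
      unfolding B_def by (rule nn_integral_mono) (metis pw[of "- g _" "- h _"] minus_add_distrib)
    also have "\<dots> = G + B'" unfolding G_def B'_def
      using gm h by (subst nn_integral_add) auto
    finally show ?thesis .
  qed
  have B2: "B' \<le> G + B"
  proof -
    have "B' \<le> (\<integral>\<^sup>+ x. ennreal (norm (g x)) + ennreal (- (g x + h x)) \<partial>M)"
      unfolding B'_def by (rule nn_integral_mono) (metis pw[of "g _" "- (g _ + h _)"] minus_add_distrib add_minus_cancel)
    also have "\<dots> = G + B" unfolding G_def B_def
      using gm h by (subst nn_integral_add) auto
    finally show ?thesis .
  qed
  have notboth: "A' = \<infinity> \<or> B' = \<infinity>"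
  proof (rule ccontr)
    assume "\<not> ?thesis"
    hence "A' < \<infinity>" "B' < \<infinity>" by (auto simp: top.not_eq_extremum)
    have "(\<integral>\<^sup>+ x. ennreal (norm (h x)) \<partial>M) = (\<integral>\<^sup>+ x. ennreal (h x) + ennreal (- h x) \<partial>M)"
      by (intro nn_integral_cong) (auto simp: ennreal_neg abs_real_def)
    also have "\<dots> = A' + B'" unfolding A'_def B'_def using h by (subst nn_integral_add) auto
    finally have "(\<integral>\<^sup>+ x. ennreal (norm (h x)) \<partial>M) < \<infinity>"
      using \<open>A' < \<infinity>\<close> \<open>B' < \<infinity>\<close> by (simp add: ennreal_add_less_top)
    hence "integrable M h" using h integrable_iff_bounded by blast
    with False show False by simp
  qed
  have eq1: "ext_integral M (\<lambda>x. g x + h x) = enn2ereal A - enn2ereal B"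
    unfolding ext_integral_def A_def B_def by simp
  have eq2: "ext_integral M h = enn2ereal A' - enn2ereal B'"
    unfolding ext_integral_def A'_def B'_def by simp
  show ?thesis
  proof (cases "A' = \<infinity>")
    case True
    have "A = \<infinity>"
    proof (rule ccontr)
      assume "A \<noteq> \<infinity>"
      then have "G + A < \<infinity>" using G by (simp add: ennreal_add_less_top less_top)
      then show False using leD[OF A2[unfolded True]] by blast
    qed
    then show ?thesis using True eq1 eq2 by simp
  next
    case False
    hence "B' = \<infinity>" using notboth by simp
    have "B = \<infinity>"
    proof (rule ccontr)
      assume "B \<noteq> \<infinity>"
      then have "G + B < \<infinity>" using G by (simp add: ennreal_add_less_top less_top)
      then show False using leD[OF B2[unfolded \<open>B' = \<infinity>\<close>]] by blast
    qed
    have "A' < \<infinity>" using False by (simp add: less_top)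
    then have "G + A' < \<infinity>" using G by (simp add: ennreal_add_less_top)
    then have "A < \<infinity>" using A1 by (rule le_less_trans[rotated])
    show ?thesis using \<open>B = \<infinity>\<close> \<open>B' = \<infinity>\<close> eq1 eq2 enn2ereal_fin[OF \<open>A < \<infinity>\<close>]
      enn2ereal_fin[OF \<open>A' < \<infinity>\<close>] by simp
  qed
qed

lemma ereal_add_cancel_le: "(ereal c + a \<le> ereal c + b) = (a \<le> b)"
  by (cases a; cases b) auto

theorem lemma9:
  fixes f :: "nat \<Rightarrow> nat \<Rightarrow> real ^ 'd \<Rightarrow> real"
    and P :: "nat \<Rightarrow> nat \<Rightarrow> real"
    and T :: "real ^ 'd \<Rightarrow> real ^ 'k"
  assumes P_pos: "\<And>y r. y \<in> {0, 1} \<Longrightarrow> r \<in> {0, 1} \<Longrightarrow> P y r > 0"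
    and P_sum: "P 0 0 + P 0 1 + P 1 0 + P 1 1 = 1"
    and f_meas: "\<And>y r. y \<in> {0, 1} \<Longrightarrow> r \<in> {0, 1} \<Longrightarrow> f y r \<in> borel_measurable lborel"
    and f_pos: "\<And>y r x. y \<in> {0, 1} \<Longrightarrow> r \<in> {0, 1} \<Longrightarrow> f y r x > 0"
    and f_dens: "\<And>y r. y \<in> {0, 1} \<Longrightarrow> r \<in> {0, 1} \<Longrightarrow> (\<integral>\<^sup>+ x. ennreal (f y r x) \<partial>lborel) = 1"
    and T_meas: "T \<in> borel_measurable lborel"
    and KL_fin: "integrable lborel (\<lambda>x. pxr f P 0 x * ln (pxr f P 0 x / pxr f P 1 x))"
  shows "(\<forall>\<theta>. ((\<integral>\<^sup>+ x. ennreal (qth f P T \<theta> x) \<partial>lborel) = 1)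
              \<longleftrightarrow> ((\<integral>\<^sup>+ x. ennreal (pxr f P 1 x * wth f P T \<theta> x) \<partial>lborel) = 1))
       \<and> (\<forall>\<theta>. is_argmin (\<lambda>\<theta>. (\<integral>\<^sup>+ x. ennreal (qth f P T \<theta> x) \<partial>lborel) = 1)
                         (\<lambda>\<theta>. KL (pxr f P 0) (qth f P T \<theta>)) \<theta>
              \<longleftrightarrow> is_argmin (\<lambda>\<theta>. (\<integral>\<^sup>+ x. ennreal (pxr f P 1 x * wth f P T \<theta> x) \<partial>lborel) = 1)
                         (\<lambda>\<theta>. ext_integral lborel (\<lambda>x. pxr f P 0 x * - ln (wth f P T \<theta> x))) \<theta>)"
proof -
  have pxy_pos: "\<And>x y r. y \<in> {0,1} \<Longrightarrow> r \<in> {0,1} \<Longrightarrow> pxy f P x y r > 0"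
  proof -
    fix x y r assume y: "y \<in> {0::nat,1}" and r: "r \<in> {0::nat,1}"
    have "PR P r > 0" unfolding PR_def using P_pos[of 0 r] P_pos[of 1 r] r by simp
    then show "pxy f P x y r > 0" unfolding pxy_def
      using P_pos[OF y r] f_pos[OF y r] by simp
  qed
  have p1pos: "\<And>x. pxr f P 1 x > 0" unfolding pxr_def using pxy_pos by (simp add: add_pos_pos)
  have p0pos: "\<And>x. pxr f P 0 x > 0" unfolding pxr_def using pxy_pos by (simp add: add_pos_pos)
  have qw: "qth f P T \<theta> x = pxr f P 1 x * wth f P T \<theta> x" for \<theta> x
  proof -
    obtain a0 a1 b0 b1 where th: "\<theta> = (a0, a1, b0, b1)" by (cases \<theta>) auto
    have ne: "pxr f P 1 x \<noteq> 0" using p1pos[of x] by simp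
    have alg0: "s * (E1 * (b / s) + E0 * (1 - b / s)) = E1 * b + E0 * (s - b)"
      if "s \<noteq> 0" for E1 E0 b s :: real
      using that by (simp add: field_simps)
    have alg: "E1 * b + E0 * a = s * (E1 * (b / s) + E0 * (1 - b / s))"
      if "s = a + b" "s \<noteq> 0" for E1 E0 a b s :: real
      using alg0[OF that(2), of E1 b E0] that(1) by simp
    show ?thesis unfolding th qth_def wth_def eta1_def using ne
      by (simp only: prod.case) (rule alg, simp add: pxr_def, simp)
  qed
  have wpos: "wth f P T \<theta> x > 0" for \<theta> x
  proof -
    have "qth f P T \<theta> x > 0"
    proof -
      obtain a0 a1 b0 b1 where th: "\<theta> = (a0, a1, b0, b1)" by (cases \<theta>) auto
      show ?thesis unfolding th qth_def using pxy_pos[of 1 1 x] pxy_pos[of 0 1 x]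
        by (simp add: add_pos_pos)
    qed
    then show ?thesis using qw[of \<theta> x] p1pos[of x] by (simp add: zero_less_mult_iff)
  qed
  define c where "c = integral\<^sup>L lborel (\<lambda>x. pxr f P 0 x * ln (pxr f P 0 x / pxr f P 1 x))"
  have KLeq: "KL (pxr f P 0) (qth f P T \<theta>) =
      ereal c + ext_integral lborel (\<lambda>x. pxr f P 0 x * - ln (wth f P T \<theta> x))" for \<theta>
  proof -
    obtain a0 a1 b0 b1 where th: "\<theta> = (a0, a1, b0, b1)" by (cases \<theta>) auto
    have meas: "(\<lambda>x. pxr f P 0 x * - ln (wth f P T \<theta> x)) \<in> borel_measurable lborel"
      unfolding th wth_def eta1_def pxr_def pxy_def
      using f_meas[of 0 0] f_meas[of 1 0] f_meas[of 0 1] f_meas[of 1 1] T_meas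
      by measurable
    have "KL (pxr f P 0) (qth f P T \<theta>) = ext_integral lborel
        (\<lambda>x. pxr f P 0 x * ln (pxr f P 0 x / pxr f P 1 x) + pxr f P 0 x * - ln (wth f P T \<theta> x))"
      unfolding KL_def qw
    proof (rule arg_cong[where f="ext_integral lborel"], rule ext)
      fix x
      have e: "ln (pxr f P 0 x / (pxr f P 1 x * wth f P T \<theta> x)) =
            ln (pxr f P 0 x / pxr f P 1 x) - ln (wth f P T \<theta> x)"
        using p0pos[of x] p1pos[of x] wpos[of \<theta> x]
        by (simp add: ln_div ln_mult)
      then show "pxr f P 0 x * ln (pxr f P 0 x / (pxr f P 1 x * wth f P T \<theta> x)) =
          pxr f P 0 x * ln (pxr f P 0 x / pxr f P 1 x) + pxr f P 0 x * - ln (wth f P T \<theta> x)"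
        by (subst e) (simp add: right_diff_distrib)
    qed
    also have "\<dots> = ereal c + ext_integral lborel (\<lambda>x. pxr f P 0 x * - ln (wth f P T \<theta> x))"
      unfolding c_def by (rule ext_integral_add[OF KL_fin meas])
    finally show ?thesis .
  qed
  have qw': "qth f P T \<theta> = (\<lambda>x. pxr f P 1 x * wth f P T \<theta> x)" for \<theta>
    using qw by blast
  have KLeq': "(\<lambda>\<theta>. KL (pxr f P 0) (qth f P T \<theta>)) =
      (\<lambda>\<theta>. ereal c + ext_integral lborel (\<lambda>x. pxr f P 0 x * - ln (wth f P T \<theta> x)))"
    using KLeq by blast
  have gen: "is_argmin C (\<lambda>\<theta>. ereal c + F \<theta>) \<theta> = is_argmin C F \<theta>" for C F and \<theta> :: "'z"
    unfolding is_argmin_def ereal_add_cancel_le by (rule refl)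
  show ?thesis
  proof (intro conjI allI)
    fix \<theta>
    show "((\<integral>\<^sup>+ x. ennreal (qth f P T \<theta> x) \<partial>lborel) = 1)
              \<longleftrightarrow> ((\<integral>\<^sup>+ x. ennreal (pxr f P 1 x * wth f P T \<theta> x) \<partial>lborel) = 1)"
      by (simp only: qw')
  next
    fix \<theta>
    show "is_argmin (\<lambda>\<theta>. (\<integral>\<^sup>+ x. ennreal (qth f P T \<theta> x) \<partial>lborel) = 1)
                         (\<lambda>\<theta>. KL (pxr f P 0) (qth f P T \<theta>)) \<theta>
              \<longleftrightarrow> is_argmin (\<lambda>\<theta>. (\<integral>\<^sup>+ x. ennreal (pxr f P 1 x * wth f P T \<theta> x) \<partial>lborel) = 1)
                         (\<lambda>\<theta>. ext_integral lborel (\<lambda>x. pxr f P 0 x * - ln (wth f P T \<theta> x))) \<theta>"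
      unfolding KLeq' gen by (simp only: qw')
  qed
qed

end
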